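(* Let $k$ be a field, $D\ge0$ an integer and $e_1,e_2,e_3$ nonnegative integers with $e_i\le D$ for all $i$ and $e_i+e_j\le D$ for all $i\ne j$. Let $R_1,R_2,R_3\in k[u,v]$ be nonzero homogeneous polynomials of degrees $e_1,e_2,e_3$. Then the $k$-vector space $$\{(R'_1,R'_2,R'_3)\in k[u,v]_{D-e_1}\times k[u,v]_{D-e_2}\times k[u,v]_{D-e_3}:\ R_1R'_1+R_2R'_2+R_3R'_3=0\}$$ has dimension $2+2D-(e_1+e_2+e_3)+\deg\gcd(R_1,R_2,R_3)$.
   Context: $k[u,v]_m$ denotes the space of homogeneous polynomials of degree $m$ in two variables (including $0$). *)

theory Defs
  imports "HOL-Computational_Algebra.Computational_Algebra" "HOL-Library.Product_Plus"
begin

text \<open>Bivariate polynomials k[u,v] are represented as 'a poly poly: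
  coeff (coeff p j) i is the coefficient of u^i v^j.\<close>

definition bihom :: "nat \<Rightarrow> 'a::zero poly poly \<Rightarrow> bool" where
  "bihom m p \<longleftrightarrow> (\<forall>i j. coeff (coeff p j) i \<noteq> 0 \<longrightarrow> i + j = m)"

definition bi_total_degree :: "'a::zero poly poly \<Rightarrow> nat" where
  "bi_total_degree p = Max {i + j | i j. coeff (coeff p j) i \<noteq> 0}"

definition triple_scale ::
  "'a::comm_semiring_1 \<Rightarrow> 'a poly poly \<times> 'a poly poly \<times> 'a poly poly
      \<Rightarrow> 'a poly poly \<times> 'a poly poly \<times> 'a poly poly" where
  "triple_scale c x = (case x of (a, b, d) \<Rightarrow>
      (smult [:c:] a, smult [:c:] b, smult [:c:] d))"

end

theory Submission
  imports Defs
begin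


context vector_space_pair
begin

lemma dim_image_eq_gen:
  assumes lf: "Vector_Spaces.linear s1 s2 f"
    and fi: "inj_on f (vs1.span S)"
  shows "vs2.dim (f ` S) = vs1.dim S"
proof -
  obtain B where B: "B \<subseteq> S" "vs1.independent B" "S \<subseteq> vs1.span B" "card B = vs1.dim S"
    using vs1.basis_exists[of S] by auto
  then have "vs1.span S = vs1.span B"
    using vs1.span_mono[of B S] vs1.span_mono[of S "vs1.span B"] vs1.span_span[of B] by auto
  moreover have "card (f ` B) = card B"
    using assms card_image[of f B] inj_on_subset[of f "vs1.span S" B] B vs1.span_superset by auto
  moreover have "(f ` B) \<subseteq> (f ` S)"
    using B by auto
  ultimately show ?thesis
    by (metis B(2) B(4) fi lf linear_dependent_inj_imageD linear_span_image vs2.dim_eq_card_independent vs2.dim_span)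
qed

lemma rank_nullity:
  assumes lf: "Vector_Spaces.linear s1 s2 f" and W: "vs1.subspace W"
    and fin: "finite B0" "W \<subseteq> vs1.span B0"
  shows "vs1.dim W = vs1.dim {x\<in>W. f x = 0} + vs2.dim (f ` W)"
proof -
  define K where "K = {x\<in>W. f x = 0}"
  have K: "vs1.subspace K"
    using W unfolding K_def vs1.subspace_def
    by (auto simp: linear_add[OF lf] linear_scale[OF lf] linear_0[OF lf])
  obtain Bk where Bk: "Bk \<subseteq> K" "vs1.independent Bk" "K \<subseteq> vs1.span Bk" "card Bk = vs1.dim K"
    using vs1.basis_exists[of K] by blast
  have "Bk \<subseteq> W" using Bk(1) K_def by auto
  then obtain BW where BW: "Bk \<subseteq> BW" "BW \<subseteq> W" "vs1.independent BW" "W \<subseteq> vs1.span BW"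
    using vs1.maximal_independent_subset_extend[of Bk W] Bk(2) by blast
  have finBW: "finite BW"
    using vs1.independent_span_bound[OF fin(1) BW(3)] BW(2) fin(2) by blast
  have dimW: "vs1.dim W = card BW"
    using vs1.basis_card_eq_dim[OF BW(2,4,3)] by simp
  define C where "C = BW - Bk"
  have finC: "finite C" and finBk: "finite Bk" using finBW BW(1) C_def finite_subset by auto
  have cardBW: "card BW = card Bk + card C"
    unfolding C_def using finBW BW(1) by (metis card_Diff_subset card_mono finite_subset le_add_diff_inverse)
  have spanBW: "vs1.span BW \<subseteq> W" using vs1.span_minimal[OF BW(2) W] .
  have spanBk: "vs1.span Bk \<subseteq> K" using vs1.span_minimal[OF Bk(1) K] .
  have inj0: "x = 0" if x: "x \<in> vs1.span C" "f x = 0" for x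
  proof -
    have "x \<in> vs1.span BW" using x(1) vs1.span_mono[of C BW] C_def by auto
    then have "x \<in> K" using spanBW x(2) K_def by auto
    then have xk: "x \<in> vs1.span Bk" using Bk(3) by auto
    obtain u where u: "x = (\<Sum>v\<in>C. u v *a v)" using x(1) vs1.span_finite[OF finC] by auto
    obtain w where w: "x = (\<Sum>v\<in>Bk. w v *a v)" using xk vs1.span_finite[OF finBk] by auto
    define z where "z v = (if v \<in> C then u v else - w v)" for v
    have BWu: "BW = C \<union> Bk" "C \<inter> Bk = {}" using C_def BW(1) by auto
    have "(\<Sum>v\<in>BW. z v *a v) = (\<Sum>v\<in>C. z v *a v) + (\<Sum>v\<in>Bk. z v *a v)"
      unfolding BWu(1) by (rule sum.union_disjoint[OF finC finBk BWu(2)])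
    also have "(\<Sum>v\<in>C. z v *a v) = (\<Sum>v\<in>C. u v *a v)" by (simp add: z_def)
    also have "(\<Sum>v\<in>Bk. z v *a v) = (\<Sum>v\<in>Bk. (- w v) *a v)"
      using BWu(2) by (intro sum.cong) (auto simp: z_def)
    also have "\<dots> = - (\<Sum>v\<in>Bk. w v *a v)"
      by (simp add: vs1.scale_minus_left sum_negf)
    finally have "(\<Sum>v\<in>BW. z v *a v) = 0" using u w by simp
    then have "\<forall>v\<in>BW. z v = 0"
      using BW(3) finBW unfolding vs1.independent_explicit_module by blast
    then have "\<forall>v\<in>C. u v = 0" using BWu z_def by (metis UnI1)
    then show "x = 0" using u by simp
  qed
  have injC: "inj_on f (vs1.span C)"
    using linear_inj_on_iff_eq_0[OF lf vs1.subspace_span] inj0 by blast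
  have indC: "vs2.independent (f ` C)"
    using linear_independent_injective_image[OF lf _ injC] vs1.independent_mono[OF BW(3)] C_def by auto
  have cardfC: "card (f ` C) = card C"
    using card_image injC vs1.span_superset inj_on_subset by metis
  have sub1: "f ` W \<subseteq> vs2.span (f ` C)"
  proof
    fix y assume "y \<in> f ` W"
    then obtain x where x: "x \<in> W" "y = f x" by auto
    have "BW = Bk \<union> C" using C_def BW(1) by auto
    then have "x \<in> vs1.span (Bk \<union> C)" using BW(4) x by auto
    then obtain a b where ab: "x = a + b" "a \<in> vs1.span Bk" "b \<in> vs1.span C"
      unfolding vs1.span_Un by auto
    have "f a = 0" using ab(2) spanBk K_def by auto
    then have "y = f b" using x ab linear_add[OF lf] by simp
    moreover have "f b \<in> vs2.span (f ` C)" using ab(3) linear_span_image[OF lf] by auto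
    ultimately show "y \<in> vs2.span (f ` C)" by simp
  qed
  have sub2: "f ` C \<subseteq> f ` W" using C_def BW(2) by auto
  have "vs2.span (f ` W) = vs2.span (f ` C)"
    using sub1 sub2 vs2.span_mono vs2.span_span
    by (metis subset_antisym vs2.span_minimal vs2.subspace_span)
  then have "vs2.dim (f ` W) = card C"
    using vs2.span_eq_dim vs2.dim_eq_card_independent[OF indC] cardfC by metis
  then show ?thesis using dimW cardBW Bk(4) K_def by simp
qed

lemma dim_eq_imp_eq:
  assumes U: "vs1.subspace U" and UV: "U \<subseteq> V" and fin: "finite B0" "V \<subseteq> vs1.span B0"
    and eq: "vs1.dim U = vs1.dim V"
  shows "V \<subseteq> U"
proof
  fix v assume v: "v \<in> V"
  obtain BU where BU: "BU \<subseteq> U" "vs1.independent BU" "U \<subseteq> vs1.span BU" "card BU = vs1.dim U"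
    using vs1.basis_exists[of U] by blast
  obtain BV where BV: "BV \<subseteq> V" "vs1.independent BV" "V \<subseteq> vs1.span BV" "card BV = vs1.dim V"
    using vs1.basis_exists[of V] by blast
  have finBV: "finite BV" using vs1.independent_span_bound[OF fin(1) BV(2)] BV(1) fin(2) by blast
  show "v \<in> U"
  proof (rule ccontr)
    assume "v \<notin> U"
    then have nv: "v \<notin> vs1.span BU" using vs1.span_minimal[OF BU(1) U] by auto
    then have ind: "vs1.independent (insert v BU)" using vs1.independent_insertI BU(2) by blast
    have "insert v BU \<subseteq> vs1.span BV" using BU(1) UV v BV(3) by auto
    from vs1.independent_span_bound[OF finBV ind this]
    have "finite (insert v BU)" "card (insert v BU) \<le> card BV" by auto
    moreover have "v \<notin> BU" using nv vs1.span_superset by auto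
    ultimately show False using BU(4) BV(4) eq by simp
  qed
qed

end


definition Lc :: "'a::comm_ring_1 poly \<Rightarrow> 'a poly poly" where
  "Lc p = map_poly (\<lambda>c. [:c:]) p"

lemma Lc_pCons: "Lc (pCons a p) = pCons [:a:] (Lc p)"
  unfolding Lc_def by (simp add: map_poly_pCons)

lemma Lc_add: "Lc (p + q) = Lc p + Lc q"
  unfolding Lc_def by (intro poly_eqI) (simp add: coeff_map_poly)

lemma Lc_smult: "Lc (smult a q) = smult [:a:] (Lc q)"
  unfolding Lc_def by (intro poly_eqI) (simp add: coeff_map_poly mult_to_poly mult.commute)

lemma Lc_mult: "Lc (p * q) = Lc p * Lc q"
proof (induct p)
  case 0
  then show ?case by (simp add: Lc_def)
next
  case (pCons a p)
  have "Lc (pCons a p * q) = Lc (smult a q) + Lc (pCons 0 (p * q))" by (simp add: Lc_add)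
  also have "\<dots> = smult [:a:] (Lc q) + pCons 0 (Lc p * Lc q)"
    using pCons(2) by (simp add: Lc_smult Lc_pCons)
  also have "\<dots> = Lc (pCons a p) * Lc q" by (simp add: Lc_pCons)
  finally show ?case .
qed

definition Phi :: "'a::comm_ring_1 poly poly \<Rightarrow> 'a poly poly" where
  "Phi F = poly (map_poly Lc F) [:0, [:0,1:]:]"

lemma Lc_0 [simp]: "Lc 0 = 0" by (simp add: Lc_def)

lemma Phi_pCons: "Phi (pCons a F) = Lc a + [:0, [:0,1:]:] * Phi F"
  unfolding Phi_def by (simp add: map_poly_pCons)

lemma Phi_add: "Phi (A + B) = Phi A + Phi B"
proof -
  have "map_poly Lc (A + B) = map_poly Lc A + map_poly Lc B"
    by (intro poly_eqI) (simp add: coeff_map_poly Lc_add)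
  then show ?thesis unfolding Phi_def by simp
qed

lemma Phi_0 [simp]: "Phi 0 = 0" by (simp add: Phi_def)

lemma Phi_smult: "Phi (smult a F) = Lc a * Phi F"
  by (induct F) (auto simp: Phi_pCons Lc_mult algebra_simps)

lemma Phi_mult: "Phi (A * B) = Phi A * Phi B"
  by (induct A) (auto simp: Phi_pCons Phi_add Phi_smult algebra_simps)

lemma coeff_Lc: "coeff (coeff (Lc a) m) j = (if j = 0 then coeff a m else 0)"
  by (simp add: Lc_def coeff_map_poly coeff_pCons split: nat.splits)

lemma coeff_Phi:
  "coeff (coeff (Phi F) m) j = (if j \<le> m then coeff (coeff F j) (m - j) else 0)"
proof (induct F arbitrary: m j)
  case 0
  then show ?case by simp
next
  case (pCons a F)
  show ?case
    by (cases m; cases j) (auto simp: Phi_pCons coeff_Lc pCons.hyps coeff_pCons)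
qed



lemma monom_factor:
  fixes p q :: "'b::idom poly"
  assumes pq: "p * q = monom c n" and p: "p \<noteq> 0" and q: "q \<noteq> 0"
  shows "m \<noteq> degree p \<Longrightarrow> coeff p m = 0"
proof -
  assume m: "m \<noteq> degree p"
  have c: "c \<noteq> 0" using pq p q by (metis monom_eq_0_iff mult_eq_0_iff)
  have "order 0 p + order 0 q = n" using order_mult[of p q 0] pq p q c by (simp add: order_0_monom)
  moreover have "degree p + degree q = n" using degree_mult_eq[OF p q] pq c by (simp add: degree_monom_eq)
  moreover have "order 0 p \<le> degree p" "order 0 q \<le> degree q" using order_degree p q by auto
  ultimately have od: "order 0 p = degree p" by linarith
  have "[:0, 1:] ^ degree p dvd p" using order_1[of 0 p] od by simp
  then obtain r where r: "p = [:0, 1:] ^ degree p * r" by (auto elim: dvdE)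
  have r0: "r \<noteq> 0" using r p by auto
  have "degree p = degree p + degree r" using r r0
    by (metis degree_linear_power degree_mult_eq power_eq_0_iff pCons_eq_0_iff zero_neq_one)
  then have "degree r = 0" by simp
  then obtain a where "r = [:a:]" by (metis degree_eq_zeroE)
  then have "p = monom a (degree p)" using r by (simp add: monom_altdef)
  then show ?thesis using m by (metis coeff_monom)
qed

lemma bihom_Phi: "bihom n F \<longleftrightarrow> (\<forall>m. m \<noteq> n \<longrightarrow> coeff (Phi F) m = 0)"
proof
  assume h: "bihom n F"
  show "\<forall>m. m \<noteq> n \<longrightarrow> coeff (Phi F) m = 0"
  proof (intro allI impI)
    fix m assume "m \<noteq> n"
    then show "coeff (Phi F) m = 0"
      using h unfolding bihom_def
      by (intro poly_eqI) (simp add: coeff_Phi; metis add.commute le_add_diff_inverse)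
  qed
next
  assume h: "\<forall>m. m \<noteq> n \<longrightarrow> coeff (Phi F) m = 0"
  show "bihom n F" unfolding bihom_def
  proof (intro allI impI)
    fix i j assume nz: "coeff (coeff F j) i \<noteq> 0"
    have "coeff (coeff (Phi F) (i + j)) j = coeff (coeff F j) i" by (simp add: coeff_Phi)
    then have "coeff (Phi F) (i + j) \<noteq> 0" using nz by auto
    then show "i + j = n" using h by blast
  qed
qed

lemma Phi_eq_0_iff: "Phi F = 0 \<longleftrightarrow> F = 0"
proof
  assume "Phi F = 0"
  then have "coeff (coeff F j) i = 0" for i j
    using coeff_Phi[of F "i + j" j] by simp
  then show "F = 0" by (intro poly_eqI) (simp add: poly_eq_iff)
qed simp

lemma bihom_mult:
  fixes A B :: "'a::field poly poly"
  assumes "bihom a A" "bihom b B" shows "bihom (a + b) (A * B)"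
proof -
  have "Phi A = monom (coeff (Phi A) a) a"
    using assms(1) unfolding bihom_Phi by (intro poly_eqI) (auto simp: coeff_monom)
  moreover have "Phi B = monom (coeff (Phi B) b) b"
    using assms(2) unfolding bihom_Phi by (intro poly_eqI) (auto simp: coeff_monom)
  ultimately have "Phi (A * B) = monom (coeff (Phi A) a * coeff (Phi B) b) (a + b)"
    by (metis Phi_mult mult_monom)
  then show ?thesis unfolding bihom_Phi by (auto simp: coeff_monom)
qed

lemma bihom_factor:
  fixes A B :: "'a::field poly poly"
  assumes nz: "A * B \<noteq> 0" and h: "bihom n (A * B)"
  shows "bihom (degree (Phi A)) A" "bihom (degree (Phi B)) B"
    "degree (Phi A) + degree (Phi B) = n"
proof -
  have A: "Phi A \<noteq> 0" and B: "Phi B \<noteq> 0" using nz Phi_eq_0_iff by auto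
  have eq: "Phi A * Phi B = monom (coeff (Phi (A * B)) n) n"
    using h unfolding bihom_Phi Phi_mult[symmetric] by (intro poly_eqI) (auto simp: coeff_monom)
  show "bihom (degree (Phi A)) A" unfolding bihom_Phi
    using monom_factor[OF eq A B] by blast
  have eq2: "Phi B * Phi A = monom (coeff (Phi (A * B)) n) n" using eq by (simp add: mult.commute)
  show "bihom (degree (Phi B)) B" unfolding bihom_Phi
    using monom_factor[OF eq2 B A] by blast
  have "coeff (Phi (A * B)) n \<noteq> 0"
    using eq A B by (metis monom_eq_0_iff no_zero_divisors)
  then show "degree (Phi A) + degree (Phi B) = n"
    using eq degree_mult_eq[OF A B] by (simp add: degree_monom_eq)
qed

lemma bihom_unique:
  assumes "F \<noteq> 0" "bihom a F" "bihom b F" shows "a = b"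
proof -
  obtain j where "coeff F j \<noteq> 0" using assms(1) by (metis leading_coeff_0_iff)
  then obtain i where i: "coeff (coeff F j) i \<noteq> 0" by (metis leading_coeff_0_iff)
  have "i + j = a" using i assms(2) unfolding bihom_def by blast
  moreover have "i + j = b" using i assms(3) unfolding bihom_def by blast
  ultimately show ?thesis by simp
qed

lemma bi_total_degree_eq:
  assumes "F \<noteq> 0" "bihom n F" shows "bi_total_degree F = n"
proof -
  obtain j where "coeff F j \<noteq> 0" using assms(1) by (metis leading_coeff_0_iff)
  then obtain i where "coeff (coeff F j) i \<noteq> 0" by (metis leading_coeff_0_iff)
  then have "{i + j | i j. coeff (coeff F j) i \<noteq> 0} = {n}"
    using assms(2) unfolding bihom_def by blast
  then show ?thesis unfolding bi_total_degree_def by simp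
qed

lemma bihom_0 [simp]: "bihom n 0" by (simp add: bihom_def)

lemma bihom_add: "bihom n A \<Longrightarrow> bihom n B \<Longrightarrow> bihom n (A + B)"
  unfolding bihom_def by (metis add.right_neutral coeff_add)

lemma bihom_smult: "bihom n A \<Longrightarrow> bihom n (smult [:c:] (A::'a::idom poly poly))"
  unfolding bihom_def by (simp add: coeff_smult)

lemma bihom_uminus: "bihom n A \<Longrightarrow> bihom n (- A)"
  unfolding bihom_def by auto

lemma bihom_diff: "bihom n A \<Longrightarrow> bihom n B \<Longrightarrow> bihom n (A - B)"
  unfolding bihom_def by (metis coeff_diff diff_zero diff_self)



definition sc :: "'a::field \<Rightarrow> 'a poly poly \<Rightarrow> 'a poly poly" where
  "sc c p = smult [:c:] p"

lemma triple_scale_simp [simp]: "triple_scale c (a, b, d) = (sc c a, sc c b, sc c d)"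
  by (simp add: triple_scale_def sc_def)

lemma vs_sc_ax: "vector_space (sc :: 'a::field \<Rightarrow> _)"
  by unfold_locales (auto simp: sc_def smult_add_right smult_add_left[symmetric] mult_to_poly one_pCons[symmetric] mult.commute)

lemma vs_tr_ax: "vector_space (triple_scale :: 'a::field \<Rightarrow> _)"
proof -
  interpret v: vector_space "sc :: 'a \<Rightarrow> _" by (rule vs_sc_ax)
  show ?thesis
    by unfold_locales (auto simp: v.scale_right_distrib v.scale_left_distrib)
qed

interpretation vs_sc: vector_space "sc :: 'a::field \<Rightarrow> _" by (rule vs_sc_ax)
interpretation vs_tr: vector_space "triple_scale :: 'a::field \<Rightarrow> _" by (rule vs_tr_ax)
interpretation p_ts: vector_space_pair "triple_scale :: 'a::field \<Rightarrow> _" "sc :: 'a::field \<Rightarrow> _" ..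
interpretation p_st: vector_space_pair "sc :: 'a::field \<Rightarrow> _" "triple_scale :: 'a::field \<Rightarrow> _" ..

definition Hm :: "nat \<Rightarrow> 'a::field poly poly set" where
  "Hm m = {P. bihom m P}"

lemma Hm_subspace: "vs_sc.subspace (Hm m)"
  unfolding vs_sc.subspace_def Hm_def by (auto simp: bihom_add sc_def bihom_smult)

definition Mon :: "nat \<Rightarrow> 'a::field poly poly set" where
  "Mon m = (\<lambda>i. monom (monom 1 i) (m - i)) ` {..m}"

lemma coeff_scM:
  "coeff (coeff (sc c (monom (monom 1 i) n)) j) k = (if j = n \<and> k = i then c else 0)"
  by (simp add: sc_def coeff_monom)

lemma Mon_inj: "inj_on (\<lambda>i. monom (monom (1::'a::field) i) (m - i)) {..m}"
  by (intro inj_onI) (metis monom_eq_iff' one_neq_zero monom_eq_0_iff)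

lemma finite_Mon: "finite (Mon m)" by (simp add: Mon_def)

lemma card_Mon: "card (Mon m :: 'a::field poly poly set) = m + 1"
  unfolding Mon_def using card_image[OF Mon_inj] by simp

lemma Mon_sub: "Mon m \<subseteq> Hm m"
  unfolding Mon_def Hm_def bihom_def by (auto simp: coeff_monom split: if_splits)

lemma sum_coeff2: "coeff (coeff (sum f S) j) k = (\<Sum>x\<in>S. coeff (coeff (f x) j) k)"
  by (simp add: coeff_sum)

lemma Mon_indep: "vs_sc.independent (Mon m :: 'a::field poly poly set)"
proof (rule vs_sc.independent_if_scalars_zero[OF finite_Mon])
  fix f :: "'a poly poly \<Rightarrow> 'a" and x :: "'a poly poly"
  assume s: "(\<Sum>x\<in>Mon m. sc (f x) x) = 0" and x: "x \<in> Mon m"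
  define M where "M i = monom (monom (1::'a) i) (m - i)" for i
  obtain i0 where i0: "i0 \<le> m" "x = M i0" using x unfolding Mon_def M_def by auto
  have "(\<Sum>x\<in>Mon m. sc (f x) x) = (\<Sum>i\<le>m. sc (f (M i)) (M i))"
    unfolding Mon_def M_def by (subst sum.reindex[OF Mon_inj]) simp
  then have "0 = coeff (coeff (\<Sum>i\<le>m. sc (f (M i)) (M i)) (m - i0)) i0" using s by simp
  also have "\<dots> = (\<Sum>i\<le>m. if m - i0 = m - i \<and> i0 = i then f (M i) else 0)"
    unfolding sum_coeff2 M_def coeff_scM by simp
  also have "\<dots> = (\<Sum>i\<le>m. if i = i0 then f (M i) else 0)"
    by (intro sum.cong) auto
  also have "\<dots> = f (M i0)" using i0 by simp
  finally show "f x = 0" using i0 by simp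
qed

lemma Hm_span: "Hm m \<subseteq> vs_sc.span (Mon m)"
proof
  fix F :: "'a poly poly" assume F: "F \<in> Hm m"
  define M where "M i = monom (monom (1::'a) i) (m - i)" for i
  have eq: "F = (\<Sum>i\<le>m. sc (coeff (coeff F (m - i)) i) (M i))"
  proof (intro poly_eqI)
    fix j k
    have "coeff (coeff (\<Sum>i\<le>m. sc (coeff (coeff F (m - i)) i) (M i)) j) k
        = (\<Sum>i\<le>m. if j = m - i \<and> k = i then coeff (coeff F (m - i)) i else 0)"
      unfolding sum_coeff2 M_def coeff_scM by simp
    also have "\<dots> = (\<Sum>i\<le>m. if i = k then (if j = m - k then coeff (coeff F j) k else 0) else 0)"
      by (intro sum.cong) auto
    also have "\<dots> = (if k \<le> m \<and> j = m - k then coeff (coeff F j) k else 0)" by simp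
    also have "\<dots> = coeff (coeff F j) k"
    proof -
      have "coeff (coeff F j) k \<noteq> 0 \<Longrightarrow> k \<le> m \<and> j = m - k"
        using F unfolding Hm_def bihom_def by force
      then show ?thesis by auto
    qed
    finally show "coeff (coeff F j) k = coeff (coeff (\<Sum>i\<le>m. sc (coeff (coeff F (m - i)) i) (M i)) j) k"
      by simp
  qed
  have "M i \<in> Mon m" if "i \<le> m" for i using that unfolding Mon_def M_def by auto
  then have "(\<Sum>i\<le>m. sc (coeff (coeff F (m - i)) i) (M i)) \<in> vs_sc.span (Mon m)"
    by (intro vs_sc.span_sum vs_sc.span_scale vs_sc.span_base) auto
  then show "F \<in> vs_sc.span (Mon m)" using eq by simp
qed

lemma dim_Hm: "vs_sc.dim (Hm m :: 'a::field poly poly set) = m + 1"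
proof -
  have "card (Mon m :: 'a poly poly set) = vs_sc.dim (Hm m :: 'a poly poly set)"
    by (rule vs_sc.basis_card_eq_dim) (rule Mon_sub, rule Hm_span, rule Mon_indep)
  then show ?thesis using card_Mon[where 'a='a, of m] by simp
qed



lemma lin_e1: "Vector_Spaces.linear sc (triple_scale :: 'a::field \<Rightarrow> _) (\<lambda>x. (x, 0, 0))"
  by (auto simp: Vector_Spaces.linear_iff vs_sc_ax vs_tr_ax sc_def)
lemma lin_e2: "Vector_Spaces.linear sc (triple_scale :: 'a::field \<Rightarrow> _) (\<lambda>x. (0, x, 0))"
  by (auto simp: Vector_Spaces.linear_iff vs_sc_ax vs_tr_ax sc_def)
lemma lin_e3: "Vector_Spaces.linear sc (triple_scale :: 'a::field \<Rightarrow> _) (\<lambda>x. (0, 0, x))"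
  by (auto simp: Vector_Spaces.linear_iff vs_sc_ax vs_tr_ax sc_def)
lemma lin_fst: "Vector_Spaces.linear (triple_scale :: 'a::field \<Rightarrow> _) sc fst"
  by (auto simp: Vector_Spaces.linear_iff vs_sc_ax vs_tr_ax triple_scale_def sc_def split: prod.splits)
lemma lin_snd1: "Vector_Spaces.linear (triple_scale :: 'a::field \<Rightarrow> _) sc (\<lambda>x. fst (snd x))"
  by (auto simp: Vector_Spaces.linear_iff vs_sc_ax vs_tr_ax triple_scale_def sc_def split: prod.splits)

lemma prod3_subspace:
  assumes "vs_sc.subspace A" "vs_sc.subspace B" "vs_sc.subspace (C :: 'a::field poly poly set)"
  shows "vs_tr.subspace (A \<times> B \<times> C)"
  using assms unfolding vs_sc.subspace_def vs_tr.subspace_def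
  by (auto simp: zero_prod_def)

lemma prod3_span:
  fixes A B C :: "'a::field poly poly set"
  assumes "A \<subseteq> vs_sc.span BA" "B \<subseteq> vs_sc.span BB" "C \<subseteq> vs_sc.span BC"
  shows "A \<times> B \<times> C \<subseteq> vs_tr.span ((\<lambda>x. (x, 0, 0)) ` BA \<union> (\<lambda>x. (0, x, 0)) ` BB \<union> (\<lambda>x. (0, 0, x)) ` BC)"
    (is "_ \<subseteq> vs_tr.span ?E")
proof
  fix t assume "t \<in> A \<times> B \<times> C"
  then obtain a b c where t: "t = (a, b, c)" "a \<in> A" "b \<in> B" "c \<in> C" by auto
  have "(a, 0, 0) \<in> vs_tr.span ((\<lambda>x. (x, 0, 0)) ` BA)"
    using p_st.linear_span_image[OF lin_e1, of BA] t(2) assms(1) by auto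
  then have 1: "(a, 0, 0) \<in> vs_tr.span ?E" using vs_tr.span_mono[of _ ?E] by blast
  have "(0, b, 0) \<in> vs_tr.span ((\<lambda>x. (0, x, 0)) ` BB)"
    using p_st.linear_span_image[OF lin_e2, of BB] t(3) assms(2) by auto
  then have 2: "(0, b, 0) \<in> vs_tr.span ?E" using vs_tr.span_mono[of _ ?E] by blast
  have "(0, 0, c) \<in> vs_tr.span ((\<lambda>x. (0, 0, x)) ` BC)"
    using p_st.linear_span_image[OF lin_e3, of BC] t(4) assms(3) by auto
  then have 3: "(0, 0, c) \<in> vs_tr.span ?E" using vs_tr.span_mono[of _ ?E] by blast
  have "t = (a, 0, 0) + (0, b, 0) + (0, 0, c)" using t by simp
  then show "t \<in> vs_tr.span ?E" using 1 2 3 vs_tr.span_add by metis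
qed

lemma prod3_dim:
  fixes A B C :: "'a::field poly poly set"
  assumes sA: "vs_sc.subspace A" and sB: "vs_sc.subspace B" and sC: "vs_sc.subspace C"
    and fA: "finite BA" "A \<subseteq> vs_sc.span BA"
    and fB: "finite BB" "B \<subseteq> vs_sc.span BB"
    and fC: "finite BC" "C \<subseteq> vs_sc.span BC"
  shows "vs_tr.dim (A \<times> B \<times> C) = vs_sc.dim A + vs_sc.dim B + vs_sc.dim C"
proof -
  define E where "E = (\<lambda>x. (x, 0::'a poly poly, 0::'a poly poly)) ` BA \<union> (\<lambda>x. (0, x, 0)) ` BB \<union> (\<lambda>x. (0, 0, x)) ` BC"
  have finE: "finite E" using fA fB fC E_def by simp
  have spE: "A \<times> B \<times> C \<subseteq> vs_tr.span E" using prod3_span[OF fA(2) fB(2) fC(2)] E_def by simp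
  have z: "0 \<in> A" "0 \<in> B" "0 \<in> C" using sA sB sC vs_sc.subspace_0 by auto
  have s0: "vs_sc.subspace {0::'a poly poly}" by (simp add: vs_sc.subspace_def sc_def)
  have r1: "vs_tr.dim (A \<times> B \<times> C) = vs_tr.dim {x \<in> A \<times> B \<times> C. fst x = 0} + vs_sc.dim (fst ` (A \<times> B \<times> C))"
    by (rule p_ts.rank_nullity[OF lin_fst prod3_subspace[OF sA sB sC] finE spE])
  have k1: "{x \<in> A \<times> B \<times> C. fst x = 0} = {0} \<times> B \<times> C" using z by auto
  have i1: "fst ` (A \<times> B \<times> C) = A" using z by force
  have sub1: "{0::'a poly poly} \<times> B \<times> C \<subseteq> vs_tr.span E" using spE z by auto
  have r2: "vs_tr.dim ({0::'a poly poly} \<times> B \<times> C) = vs_tr.dim {x \<in> {0::'a poly poly} \<times> B \<times> C. fst (snd x) = 0} + vs_sc.dim ((\<lambda>x. fst (snd x)) ` ({0::'a poly poly} \<times> B \<times> C))"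
    using p_ts.rank_nullity[OF lin_snd1 prod3_subspace[OF s0 sB sC] finE sub1] by simp
  have k2: "{x \<in> {0::'a poly poly} \<times> B \<times> C. fst (snd x) = 0} = (\<lambda>x. (0, 0, x)) ` C" using z by auto
  have i2: "(\<lambda>x. fst (snd x)) ` ({0::'a poly poly} \<times> B \<times> C) = B" using z by force
  have inj3: "inj_on (\<lambda>x. (0::'a poly poly, 0::'a poly poly, x)) (vs_sc.span C)" by (auto intro: inj_onI)
  have r3: "vs_tr.dim ((\<lambda>x. (0, 0, x)) ` C) = vs_sc.dim C"
    by (rule p_st.dim_image_eq_gen[OF lin_e3 inj3])
  show ?thesis using r1 r2 r3 k1 k2 i1 i2 by simp
qed



lemma hom_divides:
  fixes T C :: "'a::field poly poly"
  assumes T: "T \<noteq> 0" "bihom t T" and A: "bihom d (T * C)"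
  shows "bihom (d - t) C" and "T * C \<noteq> 0 \<Longrightarrow> t \<le> d"
proof -
  have "bihom (d - t) C \<and> (T * C \<noteq> 0 \<longrightarrow> t \<le> d)"
  proof (cases "C = 0")
    case True then show ?thesis by simp
  next
    case False
    then have nz: "T * C \<noteq> 0" using T by simp
    note f = bihom_factor[OF nz A]
    have "degree (Phi T) = t" using bihom_unique[OF T(1) f(1) T(2)] .
    then show ?thesis using f by auto
  qed
  then show "bihom (d - t) C" and "T * C \<noteq> 0 \<Longrightarrow> t \<le> d" by auto
qed

lemma dim_zero: "vs_sc.dim {0::'a::field poly poly} = 0"
  by (metis vs_sc.dim_span vs_sc.span_empty vs_sc.dim_eq_card_independent vs_sc.independent_empty card.empty)

lemma dim_zero_tr: "vs_tr.dim {0::'a::field poly poly \<times> 'a poly poly \<times> 'a poly poly} = 0"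
  by (metis vs_tr.dim_span vs_tr.span_empty vs_tr.dim_eq_card_independent vs_tr.independent_empty card.empty)

lemma Hm_fin: "finite (Mon m) \<and> Hm m \<subseteq> vs_sc.span (Mon m)"
  using finite_Mon Hm_span by auto

lemma zero_fin: "finite ({} :: 'a::field poly poly set) \<and> {0::'a poly poly} \<subseteq> vs_sc.span {}"
  by (simp add: vs_sc.span_empty)

lemma zero_subspace: "vs_sc.subspace {0::'a::field poly poly}"
  by (simp add: vs_sc.subspace_def sc_def)

lemma two_coprime:
  fixes T1 T2 F :: "'a::field_gcd poly poly"
  assumes nz: "T1 \<noteq> 0" "T2 \<noteq> 0" and h: "bihom t1 T1" "bihom t2 T2"
    and cop: "coprime T1 T2" and le: "t1 \<le> m" "t2 \<le> m" "t1 + t2 \<le> m + 1"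
    and F: "bihom m F"
  shows "\<exists>A B. bihom (m - t1) A \<and> bihom (m - t2) B \<and> F = T1 * A + T2 * B"
proof -
  define W where "W = (Hm (m - t1) :: 'a poly poly set) \<times> (Hm (m - t2) :: 'a poly poly set) \<times> {0::'a poly poly}"
  define f where "f x = T1 * fst x + T2 * fst (snd x)" for x :: "'a poly poly \<times> 'a poly poly \<times> 'a poly poly"
  have lin: "Vector_Spaces.linear triple_scale sc f"
    by (auto simp: Vector_Spaces.linear_iff vs_sc_ax vs_tr_ax triple_scale_def sc_def f_def
        algebra_simps smult_add_right split: prod.splits)
  have sW: "vs_tr.subspace W" unfolding W_def
    by (intro prod3_subspace Hm_subspace zero_subspace)
  define E where "E = (\<lambda>x. (x, 0::'a poly poly, 0::'a poly poly)) ` (Mon (m - t1) :: 'a poly poly set) \<union> (\<lambda>x. (0, x, 0)) ` (Mon (m - t2) :: 'a poly poly set) \<union> (\<lambda>x. (0, 0, x)) ` ({} :: 'a poly poly set)"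
  have finE: "finite E" unfolding E_def by (simp add: finite_Mon)
  have spE: "W \<subseteq> vs_tr.span E" unfolding W_def E_def
    by (rule prod3_span) (auto simp: Hm_span vs_sc.span_empty)
  have dW: "vs_tr.dim W = (m - t1 + 1) + (m - t2 + 1)"
    unfolding W_def
    by (subst prod3_dim[OF Hm_subspace Hm_subspace zero_subspace finite_Mon Hm_span finite_Mon Hm_span,
          of "{}"]) (auto simp: vs_sc.span_empty dim_Hm dim_zero)
  have rn: "vs_tr.dim W = vs_tr.dim {x\<in>W. f x = 0} + vs_sc.dim (f ` W)"
    by (rule p_ts.rank_nullity[OF lin sW finE spE])
  have cop2: "coprime T2 T1" using cop by (simp add: coprime_commute)
  have dK: "vs_tr.dim {x\<in>W. f x = 0} = (m + 1) - t1 - t2"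
  proof (cases "t1 + t2 \<le> m")
    case True
    define g where "g C = (T2 * C, - (T1 * C), 0::'a poly poly)" for C
    have ling: "Vector_Spaces.linear sc triple_scale g"
      by (auto simp: Vector_Spaces.linear_iff vs_sc_ax vs_tr_ax sc_def g_def algebra_simps)
    have injg: "inj_on g (vs_sc.span (Hm (m - t1 - t2)))"
      using nz by (auto intro!: inj_onI simp: g_def)
    have "{x\<in>W. f x = 0} = g ` Hm (m - t1 - t2)"
    proof
      show "{x\<in>W. f x = 0} \<subseteq> g ` Hm (m - t1 - t2)"
      proof
        fix x assume x: "x \<in> {x\<in>W. f x = 0}"
        then obtain A B where AB: "x = (A, B, 0)" "bihom (m - t1) A" "bihom (m - t2) B"
          "T1 * A + T2 * B = 0" unfolding W_def Hm_def f_def by auto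
        have "T2 dvd T1 * A" using AB(4) by (metis add_eq_0_iff dvd_minus_iff dvd_triv_left)
        then have "T2 dvd A" using coprime_dvd_mult_right_iff[OF cop2] by simp
        then obtain C where C: "A = T2 * C" by (auto elim: dvdE)
        have hC: "bihom (m - t1 - t2) C" using hom_divides(1)[OF nz(2) h(2), of "m - t1" C] AB(2) C by simp
        have "T2 * (T1 * C + B) = 0" using AB(4) C by (simp add: algebra_simps)
        then have "B = - (T1 * C)" using nz(2) by (simp add: add_eq_0_iff)
        then show "x \<in> g ` Hm (m - t1 - t2)"
          using AB C hC unfolding g_def Hm_def by auto
      qed
    next
      show "g ` Hm (m - t1 - t2) \<subseteq> {x\<in>W. f x = 0}"
      proof
        fix x assume "x \<in> g ` Hm (m - t1 - t2)"
        then obtain C where C: "x = g C" "bihom (m - t1 - t2) C" unfolding Hm_def by auto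
        have "bihom (t2 + (m - t1 - t2)) (T2 * C)" by (rule bihom_mult[OF h(2) C(2)])
        moreover have "t2 + (m - t1 - t2) = m - t1" using True by simp
        moreover have "bihom (t1 + (m - t1 - t2)) (T1 * C)" by (rule bihom_mult[OF h(1) C(2)])
        moreover have "t1 + (m - t1 - t2) = m - t2" using True by simp
        ultimately show "x \<in> {x\<in>W. f x = 0}"
          using C unfolding W_def Hm_def g_def f_def by (auto intro: bihom_uminus simp: algebra_simps)
      qed
    qed
    then have "vs_tr.dim {x\<in>W. f x = 0} = vs_sc.dim (Hm (m - t1 - t2) :: 'a poly poly set)"
      using p_st.dim_image_eq_gen[OF ling injg] by simp
    then show ?thesis using True dim_Hm[where 'a='a] by simp
  next
    case False
    have "{x\<in>W. f x = 0} = {0}"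
    proof
      show "{x\<in>W. f x = 0} \<subseteq> {0}"
      proof
        fix x assume x: "x \<in> {x\<in>W. f x = 0}"
        then obtain A B where AB: "x = (A, B, 0)" "bihom (m - t1) A" "bihom (m - t2) B"
          "T1 * A + T2 * B = 0" unfolding W_def Hm_def f_def by auto
        have "T2 dvd T1 * A" using AB(4) by (metis add_eq_0_iff dvd_minus_iff dvd_triv_left)
        then have "T2 dvd A" using coprime_dvd_mult_right_iff[OF cop2] by simp
        then obtain C where C: "A = T2 * C" by (auto elim: dvdE)
        have "A = 0"
        proof (rule ccontr)
          assume "A \<noteq> 0"
          then have "t2 \<le> m - t1" using hom_divides(2)[OF nz(2) h(2), of "m - t1" C] AB(2) C by simp
          then show False using False le by simp
        qed
        then have "B = 0" using AB(4) nz(2) by simp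
        then show "x \<in> {0}" using AB \<open>A = 0\<close> by (simp add: zero_prod_def)
      qed
    next
      show "{0} \<subseteq> {x\<in>W. f x = 0}"
        using sW vs_tr.subspace_0 by (auto simp: f_def zero_prod_def)
    qed
    then show ?thesis using False le dim_zero_tr by simp
  qed
  have dI: "vs_sc.dim (f ` W) = m + 1" using rn dW dK le by simp
  have sub: "f ` W \<subseteq> Hm m"
  proof
    fix y assume "y \<in> f ` W"
    then obtain A B where AB: "y = T1 * A + T2 * B" "bihom (m - t1) A" "bihom (m - t2) B"
      unfolding W_def Hm_def f_def by auto
    have "bihom (t1 + (m - t1)) (T1 * A)" by (rule bihom_mult[OF h(1) AB(2)])
    moreover have "bihom (t2 + (m - t2)) (T2 * B)" by (rule bihom_mult[OF h(2) AB(3)])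
    ultimately show "y \<in> Hm m" using AB le unfolding Hm_def by (auto intro: bihom_add)
  qed
  have sI: "vs_sc.subspace (f ` W)" using p_ts.linear_subspace_image[OF lin sW] .
  have "Hm m \<subseteq> f ` W"
    by (rule p_st.dim_eq_imp_eq[OF sI sub finite_Mon Hm_span]) (simp add: dI dim_Hm)
  then obtain x where x: "x \<in> W" "F = f x" using F unfolding Hm_def by auto
  then show ?thesis unfolding W_def Hm_def f_def by (auto; blast)
qed



lemma core:
  fixes S1 S2 S3 F :: "'a::field_gcd poly poly"
  assumes nz: "S1 \<noteq> 0" "S2 \<noteq> 0" "S3 \<noteq> 0"
    and h: "bihom a1 S1" "bihom a2 S2" "bihom a3 S3"
    and g: "gcd S1 (gcd S2 S3) = 1"
    and le: "a1 + a2 \<le> N" "a1 + a3 \<le> N" "a2 + a3 \<le> N" "a1 \<le> N" "a2 \<le> N" "a3 \<le> N"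
    and F: "bihom N F"
  shows "\<exists>P1 P2 P3. bihom (N - a1) P1 \<and> bihom (N - a2) P2 \<and> bihom (N - a3) P3
           \<and> F = S1 * P1 + S2 * P2 + S3 * P3"
proof -
  define H where "H = gcd S1 S2"
  define T1 where "T1 = S1 div H"
  define T2 where "T2 = S2 div H"
  have H0: "H \<noteq> 0" using nz H_def by simp
  have S1e: "S1 = H * T1" unfolding T1_def H_def by simp
  have S2e: "S2 = H * T2" unfolding T2_def H_def by simp
  define hd where "hd = degree (Phi H)"
  have f1: "bihom hd H" "bihom (degree (Phi T1)) T1" "hd + degree (Phi T1) = a1"
    using bihom_factor[of H T1 a1] S1e nz h hd_def by auto
  have f2: "bihom (degree (Phi T2)) T2" "hd + degree (Phi T2) = a2"
    using bihom_factor[of H T2 a2] S2e nz h hd_def by auto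
  have T10: "T1 \<noteq> 0" and T20: "T2 \<noteq> 0" using S1e S2e nz by auto
  have copT: "coprime T1 T2" unfolding T1_def T2_def H_def using nz by (simp add: div_gcd_coprime)
  have "gcd H S3 = 1" unfolding H_def using g by (simp add: gcd.assoc)
  then have copH: "coprime H S3" by (simp add: coprime_iff_gcd_eq_1)
  obtain A B where AB: "bihom (N - hd) A" "bihom (N - a3) B" "F = H * A + S3 * B"
    using two_coprime[OF H0 nz(3) f1(1) h(3) copH, of N F] f1 le F by auto
  have ar: "degree (Phi T1) \<le> N - hd" "degree (Phi T2) \<le> N - hd"
    "degree (Phi T1) + degree (Phi T2) \<le> N - hd + 1" using f1 f2 le by auto
  have "\<exists>C1 C2. bihom (N - hd - degree (Phi T1)) C1 \<and> bihom (N - hd - degree (Phi T2)) C2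
      \<and> A = T1 * C1 + T2 * C2"
    by (rule two_coprime[OF T10 T20 f1(2) f2(1) copT ar AB(1)])
  then obtain C1 C2 where C: "bihom (N - hd - degree (Phi T1)) C1" "bihom (N - hd - degree (Phi T2)) C2"
      "A = T1 * C1 + T2 * C2" by blast
  have "F = S1 * C1 + S2 * C2 + S3 * B" using AB(3) C(3) S1e S2e by (simp add: algebra_simps)
  moreover have "N - hd - degree (Phi T1) = N - a1" "N - hd - degree (Phi T2) = N - a2"
    using f1 f2 by auto
  ultimately show ?thesis using C AB by metis
qed

theorem lemma3p12:
  fixes R1 R2 R3 :: "'a::field_gcd poly poly"
    and D e1 e2 e3 :: nat
  assumes "e1 \<le> D" "e2 \<le> D" "e3 \<le> D"
    and "e1 + e2 \<le> D" "e1 + e3 \<le> D" "e2 + e3 \<le> D"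
    and "R1 \<noteq> 0" "R2 \<noteq> 0" "R3 \<noteq> 0"
    and "bihom e1 R1" "bihom e2 R2" "bihom e3 R3"
  shows "int (vector_space.dim triple_scale
            {(P1, P2, P3). bihom (D - e1) P1 \<and> bihom (D - e2) P2 \<and> bihom (D - e3) P3
                \<and> R1 * P1 + R2 * P2 + R3 * P3 = 0})
         = 2 + 2 * int D - int (e1 + e2 + e3) + int (bi_total_degree (gcd R1 (gcd R2 R3)))"
proof -
  note le = assms(1-6) and nz = assms(7-9) and h = assms(10-12)
  define G where "G = gcd R1 (gcd R2 R3)"
  define S1 where "S1 = R1 div G"
  define S2 where "S2 = R2 div G"
  define S3 where "S3 = R3 div G"
  have G0: "G \<noteq> 0" using nz G_def by simp
  have R1e: "R1 = G * S1" unfolding S1_def G_def by simp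
  have R2e: "R2 = G * S2" unfolding S2_def G_def
    by (metis dvd_mult_div_cancel gcd_dvd1 gcd_dvd2 dvd_trans)
  have R3e: "R3 = G * S3" unfolding S3_def G_def
    by (metis dvd_mult_div_cancel gcd_dvd2 dvd_trans)
  define g where "g = degree (Phi G)"
  have f1: "bihom g G" "bihom (degree (Phi S1)) S1" "g + degree (Phi S1) = e1"
    using bihom_factor[of G S1 e1] R1e nz h g_def by auto
  have f2: "bihom (degree (Phi S2)) S2" "g + degree (Phi S2) = e2"
    using bihom_factor[of G S2 e2] R2e nz h g_def by auto
  have f3: "bihom (degree (Phi S3)) S3" "g + degree (Phi S3) = e3"
    using bihom_factor[of G S3 e3] R3e nz h g_def by auto
  have S0: "S1 \<noteq> 0" "S2 \<noteq> 0" "S3 \<noteq> 0" using R1e R2e R3e nz by auto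
  have btd: "bi_total_degree G = g" using bi_total_degree_eq[OF G0 f1(1)] .
  have gS: "gcd S1 (gcd S2 S3) = 1"
  proof -
    have "G = gcd (G * S1) (gcd (G * S2) (G * S3))" using G_def R1e R2e R3e by simp
    also have "\<dots> = normalize (G * gcd S1 (gcd S2 S3))"
      by (simp add: gcd_mult_left)
    also have "\<dots> = G * gcd S1 (gcd S2 S3)"
      by (simp add: normalize_mult G_def)
    finally have "G * 1 = G * gcd S1 (gcd S2 S3)" by simp
    then show ?thesis using G0 by (metis mult_left_cancel)
  qed
  define W where "W = (Hm (D - e1) :: 'a poly poly set) \<times> (Hm (D - e2) :: 'a poly poly set) \<times> (Hm (D - e3) :: 'a poly poly set)"
  define f where "f x = S1 * fst x + S2 * fst (snd x) + S3 * snd (snd x)" for x :: "'a poly poly \<times> 'a poly poly \<times> 'a poly poly"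
  have lin: "Vector_Spaces.linear triple_scale sc f"
    by (auto simp: Vector_Spaces.linear_iff vs_sc_ax vs_tr_ax triple_scale_def sc_def f_def
        algebra_simps smult_add_right split: prod.splits)
  have sW: "vs_tr.subspace W" unfolding W_def by (intro prod3_subspace Hm_subspace)
  define E where "E = (\<lambda>x. (x, 0::'a poly poly, 0::'a poly poly)) ` (Mon (D - e1) :: 'a poly poly set) \<union> (\<lambda>x. (0, x, 0)) ` (Mon (D - e2) :: 'a poly poly set) \<union> (\<lambda>x. (0, 0, x)) ` (Mon (D - e3) :: 'a poly poly set)"
  have finE: "finite E" unfolding E_def by (simp add: finite_Mon)
  have spE: "W \<subseteq> vs_tr.span E" unfolding W_def E_def
    by (rule prod3_span) (auto simp: Hm_span)
  have dW: "vs_tr.dim W = (D - e1 + 1) + (D - e2 + 1) + (D - e3 + 1)"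
    unfolding W_def
    by (subst prod3_dim[OF Hm_subspace Hm_subspace Hm_subspace finite_Mon Hm_span finite_Mon Hm_span
          finite_Mon Hm_span]) (simp add: dim_Hm)
  have rn: "vs_tr.dim W = vs_tr.dim {x\<in>W. f x = 0} + vs_sc.dim (f ` W)"
    by (rule p_ts.rank_nullity[OF lin sW finE spE])
  have K: "{(P1, P2, P3). bihom (D - e1) P1 \<and> bihom (D - e2) P2 \<and> bihom (D - e3) P3
                \<and> R1 * P1 + R2 * P2 + R3 * P3 = 0} = {x\<in>W. f x = 0}"
  proof -
    have "R1 * P1 + R2 * P2 + R3 * P3 = G * (S1 * P1 + S2 * P2 + S3 * P3)" for P1 P2 P3
      using R1e R2e R3e by (simp add: algebra_simps)
    then show ?thesis using G0 unfolding W_def Hm_def f_def by auto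
  qed
  have img: "f ` W = Hm (D - g)"
  proof
    show "f ` W \<subseteq> Hm (D - g)"
    proof
      fix y assume "y \<in> f ` W"
      then obtain P1 P2 P3 where P: "y = S1 * P1 + S2 * P2 + S3 * P3" "bihom (D - e1) P1"
        "bihom (D - e2) P2" "bihom (D - e3) P3" unfolding W_def Hm_def f_def by auto
      have "bihom (degree (Phi S1) + (D - e1)) (S1 * P1)" by (rule bihom_mult[OF f1(2) P(2)])
      moreover have "bihom (degree (Phi S2) + (D - e2)) (S2 * P2)" by (rule bihom_mult[OF f2(1) P(3)])
      moreover have "bihom (degree (Phi S3) + (D - e3)) (S3 * P3)" by (rule bihom_mult[OF f3(1) P(4)])
      moreover have "degree (Phi S1) + (D - e1) = D - g" "degree (Phi S2) + (D - e2) = D - g"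
        "degree (Phi S3) + (D - e3) = D - g" using f1 f2 f3 le by auto
      ultimately show "y \<in> Hm (D - g)" unfolding Hm_def P(1) by (auto intro!: bihom_add)
    qed
  next
    show "Hm (D - g) \<subseteq> f ` W"
    proof
      fix F :: "'a poly poly" assume "F \<in> Hm (D - g)"
      then have F: "bihom (D - g) F" unfolding Hm_def by simp
      have ar: "degree (Phi S1) + degree (Phi S2) \<le> D - g" "degree (Phi S1) + degree (Phi S3) \<le> D - g"
        "degree (Phi S2) + degree (Phi S3) \<le> D - g" "degree (Phi S1) \<le> D - g"
        "degree (Phi S2) \<le> D - g" "degree (Phi S3) \<le> D - g" using f1 f2 f3 le by auto
      have "\<exists>P1 P2 P3. bihom (D - g - degree (Phi S1)) P1 \<and> bihom (D - g - degree (Phi S2)) P2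
        \<and> bihom (D - g - degree (Phi S3)) P3 \<and> F = S1 * P1 + S2 * P2 + S3 * P3"
        by (rule core[OF S0 f1(2) f2(1) f3(1) gS ar F])
      then obtain P1 P2 P3 where P: "bihom (D - g - degree (Phi S1)) P1" "bihom (D - g - degree (Phi S2)) P2"
        "bihom (D - g - degree (Phi S3)) P3" "F = S1 * P1 + S2 * P2 + S3 * P3" by blast
      moreover have "D - g - degree (Phi S1) = D - e1" "D - g - degree (Phi S2) = D - e2"
        "D - g - degree (Phi S3) = D - e3" using f1 f2 f3 le by auto
      ultimately have "(P1, P2, P3) \<in> W" "F = f (P1, P2, P3)" unfolding W_def Hm_def f_def by auto
      then show "F \<in> f ` W" by blast
    qed
  qed
  have dI: "vs_sc.dim (f ` W) = D - g + 1" unfolding img by (simp add: dim_Hm)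
  have nat_eq: "vs_tr.dim {x\<in>W. f x = 0} + (D - g + 1) = (D - e1 + 1) + (D - e2 + 1) + (D - e3 + 1)"
    using rn dW dI by simp
  have ge: "g \<le> e1" using f1 by simp
  show ?thesis unfolding K G_def[symmetric] btd using nat_eq le ge by linarith
qed

end
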